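(* Let $X$ be a CAT(0) space, $T_n:X\to X$ for $n\in\mathbb{N}$, and $(\gamma_n)$ a sequence of positive reals such that $(T_n)$ is jointly $(P_2)$ with respect to $(\gamma_n)$. Then for all $m,n\in\mathbb{N}$ and all $w\in X$, $d(T_nw,T_mw)\le\frac{|\gamma_n-\gamma_m|}{\gamma_n}d(w,T_nw)$.
   Context: A geodesic space $(X,d)$ is CAT(0) if for all $z\in X$, all geodesics $\gamma:[a,b]\to X$ and all $t\in[0,1]$, $d^2(z,\gamma((1-t)a+tb))\le(1-t)d^2(z,\gamma(a))+td^2(z,\gamma(b))-t(1-t)d^2(\gamma(a),\gamma(b))$. The family $(T_n)$ is jointly $(P_2)$ with respect to $(\gamma_n)$ if for all $n,m\in\mathbb{N}$ and $x,y\in X$, $\frac1{\gamma_m}\big(d^2(T_nx,T_my)+d^2(y,T_my)-d^2(y,T_nx)\big)\le\frac1{\gamma_n}\big(d^2(x,T_my)-d^2(x,T_nx)-d^2(T_nx,T_my)\big)$. *)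

theory Defs
  imports "HOL-Analysis.Analysis"
begin

definition geodesic :: "(real \<Rightarrow> 'a::metric_space) \<Rightarrow> real \<Rightarrow> real \<Rightarrow> bool" where
  "geodesic g a b \<longleftrightarrow> a \<le> b \<and> (\<forall>s\<in>{a..b}. \<forall>t\<in>{a..b}. dist (g s) (g t) = \<bar>s - t\<bar>)"

definition geodesic_space :: "'a::metric_space itself \<Rightarrow> bool" where
  "geodesic_space _ \<longleftrightarrow> (\<forall>x y :: 'a. \<exists>g a b. geodesic g a b \<and> g a = x \<and> g b = y)"

definition CAT0 :: "'a::metric_space itself \<Rightarrow> bool" where
  "CAT0 X \<longleftrightarrow> geodesic_space X \<and>
     (\<forall>(z::'a) g a b (t::real). geodesic g a b \<longrightarrow> 0 \<le> t \<longrightarrow> t \<le> 1 \<longrightarrow>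
        (dist z (g ((1 - t) * a + t * b)))\<^sup>2
          \<le> (1 - t) * (dist z (g a))\<^sup>2 + t * (dist z (g b))\<^sup>2 - t * (1 - t) * (dist (g a) (g b))\<^sup>2)"

definition jointly_P2 :: "(nat \<Rightarrow> 'a::metric_space \<Rightarrow> 'a) \<Rightarrow> (nat \<Rightarrow> real) \<Rightarrow> bool" where
  "jointly_P2 T \<gamma> \<longleftrightarrow> (\<forall>n m x y.
     (1 / \<gamma> m) * ((dist (T n x) (T m y))\<^sup>2 + (dist y (T m y))\<^sup>2 - (dist y (T n x))\<^sup>2)
       \<le> (1 / \<gamma> n) * ((dist x (T m y))\<^sup>2 - (dist x (T n x))\<^sup>2 - (dist (T n x) (T m y))\<^sup>2))"

end

theory Submission
  imports Defs
begin

lemma key: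
  fixes a b c gm gn :: real
  assumes a: "a \<ge> 0" and b: "b \<ge> 0" and c: "c \<ge> 0"
    and t1: "b \<le> a + c" and t2: "c \<le> a + b" and t3: "a \<le> b + c"
    and gm: "gm > 0" and gn: "gn > 0"
    and h: "(gn + gm) * a\<^sup>2 \<le> (gm - gn) * (b\<^sup>2 - c\<^sup>2)"
  shows "a \<le> \<bar>gn - gm\<bar> / gn * c"
proof (cases "gm \<ge> gn")
  case True
  have "b\<^sup>2 \<le> (a + c)\<^sup>2" using t1 b by (intro power_mono) auto
  hence "(gm - gn) * (b\<^sup>2 - c\<^sup>2) \<le> (gm - gn) * (a\<^sup>2 + 2*a*c)"
    using True by (intro mult_left_mono) (auto simp: power2_eq_square algebra_simps)
  with h have "gn * a * a \<le> (gm - gn) * c * a" by (simp add: power2_eq_square algebra_simps)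
  hence "gn * a \<le> (gm - gn) * c" using a
    using True c by (cases "a = 0") (auto simp: mult_le_cancel_right)
  thus ?thesis using True gn by (simp add: field_simps)
next
  case False
  have "(c - a)\<^sup>2 \<le> b\<^sup>2" using t1 t2 t3 b
    by (simp add: abs_le_iff power2_le_iff_abs_le)
  hence "(gn - gm) * (c\<^sup>2 - b\<^sup>2) \<le> (gn - gm) * (2*a*c - a\<^sup>2)"
    using False by (intro mult_left_mono) (auto simp: power2_eq_square algebra_simps)
  with h have "gn * a * a \<le> (gn - gm) * c * a" by (simp add: power2_eq_square algebra_simps)
  hence "gn * a \<le> (gn - gm) * c" using a False c
    by (cases "a = 0") (auto simp: mult_le_cancel_right)
  thus ?thesis using False gn by (simp add: field_simps)
qed

theorem proposition3p10:
  fixes T :: "nat \<Rightarrow> 'a::metric_space \<Rightarrow> 'a" and \<gamma> :: "nat \<Rightarrow> real"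
  assumes "CAT0 TYPE('a)"
    and "\<And>n. \<gamma> n > 0"
    and "jointly_P2 T \<gamma>"
  shows "\<forall>m n (w::'a). dist (T n w) (T m w) \<le> \<bar>\<gamma> n - \<gamma> m\<bar> / \<gamma> n * dist w (T n w)"
proof (intro allI)
  fix m n w
  define a where "a = dist (T n w) (T m w)"
  define b where "b = dist w (T m w)"
  define c where "c = dist w (T n w)"
  have gm: "\<gamma> m > 0" and gn: "\<gamma> n > 0" using assms(2) by auto
  have "(1 / \<gamma> m) * (a\<^sup>2 + b\<^sup>2 - c\<^sup>2) \<le> (1 / \<gamma> n) * (b\<^sup>2 - c\<^sup>2 - a\<^sup>2)"
    using assms(3) unfolding jointly_P2_def a_def b_def c_def
    by (metis dist_commute)
  hence "\<gamma> n * \<gamma> m * ((1 / \<gamma> m) * (a\<^sup>2 + b\<^sup>2 - c\<^sup>2)) \<le> \<gamma> n * \<gamma> m * ((1 / \<gamma> n) * (b\<^sup>2 - c\<^sup>2 - a\<^sup>2))"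
    using gm gn by (intro mult_left_mono) auto
  moreover have "\<gamma> n * \<gamma> m * ((1 / \<gamma> m) * (a\<^sup>2 + b\<^sup>2 - c\<^sup>2)) = \<gamma> n * (a\<^sup>2 + b\<^sup>2 - c\<^sup>2)"
    using gm by simp
  moreover have "\<gamma> n * \<gamma> m * ((1 / \<gamma> n) * (b\<^sup>2 - c\<^sup>2 - a\<^sup>2)) = \<gamma> m * (b\<^sup>2 - c\<^sup>2 - a\<^sup>2)"
    using gn by simp
  ultimately have h: "(\<gamma> n + \<gamma> m) * a\<^sup>2 \<le> (\<gamma> m - \<gamma> n) * (b\<^sup>2 - c\<^sup>2)"
    by (simp add: algebra_simps)
  have t3: "a \<le> b + c" unfolding a_def b_def c_def using dist_triangle[of "T n w" "T m w" w]
    by (simp add: dist_commute)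
  have t1: "b \<le> a + c" unfolding a_def b_def c_def using dist_triangle[of w "T m w" "T n w"]
    by (simp add: dist_commute)
  have t2: "c \<le> a + b" unfolding a_def b_def c_def using dist_triangle[of w "T n w" "T m w"]
    by (simp add: dist_commute)
  show "dist (T n w) (T m w) \<le> \<bar>\<gamma> n - \<gamma> m\<bar> / \<gamma> n * dist w (T n w)"
    using key[OF _ _ _ t1 t2 t3 gm gn h] unfolding a_def c_def b_def by simp
qed

end
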